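(* Let $q$ be a prime power, $n=q^2-1$, and let $x\in\{1,\ldots,n-1\}$ be the minimal representative of its cyclotomic coset $I_x$, with $q$-adic representation $x=a_0+a_1q$, $0\le a_0,a_1<q$. Then $I_x$ is a symmetric coset if and only if $a_0+a_1=q-1$, and $I_x$ is an SR-asymmetric coset if and only if $a_0+a_1>q-1$.
   Context: Identify $\mathbb{Z}_n$ with $\{0,\ldots,n-1\}$. The cyclotomic coset of $x$ with respect to $q$ is $I_x=\{x,\,xq\bmod n\}$; its minimal representative is its least element. The (Euclidean) reciprocal coset of $I_x$ is $I_{n-x}$. $I_x$ is symmetric if $I_{n-x}=I_x$, and asymmetric otherwise. If $I_x$ is asymmetric with reciprocal coset $I_y$, where $x,y$ are the minimal representatives and $x<y$, then $I_x$ is the FR-asymmetric coset and $I_y$ the SR-asymmetric coset of the pair. *)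

theory Defs
  imports "HOL-Computational_Algebra.Primes"
begin

(* cyclotomic coset of x modulo n with respect to q, for n = q^2 - 1 *)
definition cyc_coset :: "nat \<Rightarrow> nat \<Rightarrow> nat \<Rightarrow> nat set" where
  "cyc_coset n q x = {x mod n, (x * q) mod n}"

definition min_rep :: "nat \<Rightarrow> nat \<Rightarrow> nat \<Rightarrow> nat" where
  "min_rep n q x = Min (cyc_coset n q x)"

(* reciprocal coset of I_x is I_{n-x} (n - x taken in Z_n) *)
definition symmetric_coset :: "nat \<Rightarrow> nat \<Rightarrow> nat \<Rightarrow> bool" where
  "symmetric_coset n q x \<longleftrightarrow> cyc_coset n q ((n - x) mod n) = cyc_coset n q x"

definition SR_asymmetric_coset :: "nat \<Rightarrow> nat \<Rightarrow> nat \<Rightarrow> bool" where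
  "SR_asymmetric_coset n q x \<longleftrightarrow> \<not> symmetric_coset n q x \<and>
     min_rep n q ((n - x) mod n) < min_rep n q x"

definition prime_power :: "nat \<Rightarrow> bool" where
  "prime_power q \<longleftrightarrow> (\<exists>p k. prime p \<and> k \<ge> 1 \<and> q = p ^ k)"

end

theory Submission
  imports Defs
begin

lemma dig_less:
  fixes q c0 c1 d0 d1 :: nat
  assumes "c0 < q" "d0 < q"
  shows "c0 + c1*q < d0 + d1*q \<longleftrightarrow> c1 < d1 \<or> (c1 = d1 \<and> c0 < d0)"
proof -
  have A: "c0 + c1*q < d0 + d1*q" if "c1 < d1"
  proof -
    have "Suc c1 * q \<le> d1 * q" using that by (intro mult_right_mono) auto
    then show ?thesis using assms by simp
  qed
  have B: "d0 + d1*q < c0 + c1*q" if "d1 < c1"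
  proof -
    have "Suc d1 * q \<le> c1 * q" using that by (intro mult_right_mono) auto
    then show ?thesis using assms by simp
  qed
  show ?thesis using A B by (metis add_less_cancel_right less_asym linorder_neqE_nat)
qed

lemma dig_eq:
  fixes q c0 c1 d0 d1 :: nat
  assumes "c0 < q" "d0 < q"
  shows "c0 + c1*q = d0 + d1*q \<longleftrightarrow> c1 = d1 \<and> c0 = d0"
  using dig_less[OF assms, of c1 d1] dig_less[OF assms(2,1), of d1 c1]
  by (metis linorder_neqE_nat less_irrefl)

lemma coset_form:
  fixes q n c0 c1 :: nat
  assumes "n = q^2 - 1" "c0 < q" "c1 < q" "c0 + c1*q < n"
  shows "cyc_coset n q (c0 + c1*q) = {c0 + c1*q, c1 + c0*q}"
proof -
  have q1: "q \<ge> 1" using assms by simp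
  have qq: "q*q = n + 1" using assms q1 by (simp add: power2_eq_square)
  have "(c0 + c1*q)*q = (c1 + c0*q) + c1*n"
    by (simp add: algebra_simps) (metis qq mult.assoc add.commute mult.left_commute mult_Suc_right Suc_eq_plus1)
  moreover have "c1 + c0*q < n"
  proof -
    have "c1 + c0*q \<le> (q-1) + (q-1)*q"
      using assms by (intro add_mono mult_right_mono) auto
    also have "\<dots> = n" using qq q1 le_square[of q] by (simp add: algebra_simps diff_mult_distrib)
    finally have le: "c1 + c0*q \<le> n" .
    show ?thesis
    proof (rule ccontr)
      assume "\<not> ?thesis"
      hence eq: "c1 + c0*q = (q-1) + (q-1)*q" using le \<open>(q-1) + (q-1)*q = n\<close> by simp
      hence "c0 = q-1 \<and> c1 = q-1" using dig_eq[of c1 q "q-1" c0 "q-1"] assms q1 by simp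
      thus False using assms \<open>(q-1) + (q-1)*q = n\<close> by simp
    qed
  qed
  ultimately show ?thesis using assms unfolding cyc_coset_def
    by (simp add: mod_mult_self2)
qed

theorem mainTheorem6:
  fixes q n x a0 a1 :: nat
  assumes "prime_power q"
    and "n = q^2 - 1"
    and "1 \<le> x" and "x \<le> n - 1"
    and "x = min_rep n q x"
    and "a0 < q" and "a1 < q" and "x = a0 + a1 * q"
  shows "(symmetric_coset n q x \<longleftrightarrow> a0 + a1 = q - 1)
       \<and> (SR_asymmetric_coset n q x \<longleftrightarrow> a0 + a1 > q - 1)"
proof -
  note as = assms
  have q1: "q \<ge> 1" using as by simp
  have qq: "q*q = n + 1" using as q1 by (simp add: power2_eq_square)
  have nn: "n = (q-1) + (q-1)*q" using qq q1 le_square[of q] by (simp add: algebra_simps diff_mult_distrib)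
  have xn: "x < n" using as by simp
  define b0 where "b0 = q-1-a0"
  define b1 where "b1 = q-1-a1"
  have s0: "a0 + b0 = q - 1" "a1 + b1 = q - 1" using as b0_def b1_def by auto
  have "x + (b0 + b1*q) = (a0 + b0) + (a1 + b1)*q" using as by (simp add: algebra_simps)
  also have "\<dots> = n" using s0 nn by simp
  finally have nx: "n - x = b0 + b1*q" by simp
  have nxm: "(n - x) mod n = b0 + b1*q" using nx as xn by simp
  have b: "b0 < q" "b1 < q" using q1 b0_def b1_def by auto
  have nxl: "b0 + b1*q < n" using nx as xn by simp
  have C1: "cyc_coset n q x = {a0 + a1*q, a1 + a0*q}" using coset_form as xn by simp
  have C2: "cyc_coset n q ((n-x) mod n) = {b0 + b1*q, b1 + b0*q}"
    using coset_form[OF as(2) b nxl] nxm by simp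
  have mr: "min_rep n q x = min (a0 + a1*q) (a1 + a0*q)" unfolding min_rep_def C1 by simp
  have mr2: "min_rep n q ((n-x) mod n) = min (b0 + b1*q) (b1 + b0*q)" unfolding min_rep_def C2 by simp
  have "a0 + a1*q \<le> a1 + a0*q" using as mr by (metis min.absorb_iff1)
  hence a10: "a1 \<le> a0" using dig_less[of a1 q a0 a0 a1] as by (auto simp: not_less[symmetric])
  have sym: "symmetric_coset n q x \<longleftrightarrow> a0 + a1 = q - 1"
    unfolding symmetric_coset_def C1 C2 doubleton_eq_iff
    unfolding dig_eq[OF b(1) as(6)] dig_eq[OF b(1) as(7)] dig_eq[OF b(2) as(6)] dig_eq[OF b(2) as(7)]
    using s0 by arith
  have m2: "min_rep n q ((n-x) mod n) = b1 + b0*q"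
    using mr2 dig_less[of b0 q b1 b1 b0] b a10 b0_def b1_def by (auto simp: min_def)
  have m1: "min_rep n q x = a0 + a1*q" using as by simp
  have sr: "min_rep n q ((n-x) mod n) < min_rep n q x \<longleftrightarrow> b0 < a1 \<or> (b0 = a1 \<and> b1 < a0)"
    unfolding m1 m2 using dig_less[of b1 q a0 b0 a1] b as by simp
  show ?thesis unfolding SR_asymmetric_coset_def sym sr b0_def b1_def using s0 by arith
qed

end
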